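(* Let $d\geq 2$ and $m\geq 1$ be integers, let $p=\frac{d+1}{d+m}$, and let $$Z=p\,\frac{I_d}{d}+(1-p)\,\frac{J_d}{d},$$ where $I_d$ is the $d\times d$ identity matrix and $J_d$ is the $d\times d$ matrix all of whose entries equal $1$. Then there exists an extreme point $\Phi$ of the convex set $\mathcal{CP}\!\left(M_d,M_{d+m};\,Z,\,\frac{I_{d+m}}{d+m}\right)$ whose Choi rank equals $d+m$.
   Context: $M_n$ denotes the algebra of complex $n\times n$ matrices. For positive semidefinite $A\in M_{d_1}$ and $B\in M_{d_2}$, $\mathcal{CP}(M_{d_1},M_{d_2};A,B)$ denotes the convex set of all completely positive linear maps $\Phi:M_{d_1}\to M_{d_2}$ such that $\Phi(I_{d_1})=B$ and $\Phi^*(I_{d_2})=A$, where $\Phi^*$ is the adjoint of $\Phi$ with respect to the Hilbert–Schmidt inner product; equivalently, $\Phi(X)=\sum_i K_iXK_i^\dagger$ with $d_2\times d_1$ matrices $K_i$ satisfying $\sum_i K_i^\dagger K_i=A$ and $\sum_i K_iK_i^\dagger=B$. An extreme point of a convex set $\mathcal{K}$ is an element $\Phi\in\mathcal{K}$ such that $\Phi=t\Phi_1+(1-t)\Phi_2$ with $\Phi_1,\Phi_2\in\mathcal{K}$, $t\in(0,1)$ implies $\Phi_1=\Phi_2=\Phi$. The Choi rank of $\Phi:M_{d_1}\to M_{d_2}$ is the rank of its Choi matrix $\sum_{r,s=1}^{d_1}E_{rs}\otimes\Phi(E_{rs})$ (equivalently, the minimal number of Kraus operators of $\Phi$), where $E_{rs}$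 are the matrix units. *)

theory Defs
  imports "Jordan_Normal_Form.Schur_Decomposition" "Jordan_Normal_Form.DL_Rank"
begin

text \<open>Linear maps M_{d1} -> M_{d2} are modelled as functions on complex matrices;
  only their values on carrier_mat d1 d1 matter.\<close>

definition completely_positive :: "nat \<Rightarrow> nat \<Rightarrow> (complex mat \<Rightarrow> complex mat) \<Rightarrow> bool" where
  "completely_positive d1 d2 \<Phi> \<longleftrightarrow>
     (\<exists>Ks. set Ks \<subseteq> carrier_mat d2 d1 \<and>
        (\<forall>X \<in> carrier_mat d1 d1.
           \<Phi> X = foldr (\<lambda>K acc. K * X * mat_adjoint K + acc) Ks (0\<^sub>m d2 d2)))"

definition mtrace :: "complex mat \<Rightarrow> complex" where
  "mtrace A = (\<Sum>i<dim_row A. A $$ (i, i))"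

text \<open>Phi^*(I) = A, with Phi^* the Hilbert-Schmidt adjoint:
  <A, X> = <I, Phi X> for all X, i.e. tr(A^dagger X) = tr(Phi X).\<close>
definition hs_adjoint_at_identity :: "nat \<Rightarrow> (complex mat \<Rightarrow> complex mat) \<Rightarrow> complex mat \<Rightarrow> bool" where
  "hs_adjoint_at_identity d1 \<Phi> A \<longleftrightarrow>
     (\<forall>X \<in> carrier_mat d1 d1. mtrace (mat_adjoint A * X) = mtrace (\<Phi> X))"

definition CP_set :: "nat \<Rightarrow> nat \<Rightarrow> complex mat \<Rightarrow> complex mat \<Rightarrow> (complex mat \<Rightarrow> complex mat) set" where
  "CP_set d1 d2 A B = {\<Phi>. completely_positive d1 d2 \<Phi> \<and> \<Phi> (1\<^sub>m d1) = B \<and>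
                          hs_adjoint_at_identity d1 \<Phi> A}"

text \<open>Two maps are identified when they agree on M_{d1}.\<close>
definition extreme_point_maps :: "nat \<Rightarrow> (complex mat \<Rightarrow> complex mat) set \<Rightarrow> (complex mat \<Rightarrow> complex mat) \<Rightarrow> bool" where
  "extreme_point_maps d1 K \<Phi> \<longleftrightarrow> \<Phi> \<in> K \<and>
     (\<forall>\<Phi>1 \<in> K. \<forall>\<Phi>2 \<in> K. \<forall>t::real. 0 < t \<and> t < 1 \<and>
        (\<forall>X \<in> carrier_mat d1 d1. \<Phi> X = complex_of_real t \<cdot>\<^sub>m \<Phi>1 X + complex_of_real (1 - t) \<cdot>\<^sub>m \<Phi>2 X)
        \<longrightarrow> (\<forall>X \<in> carrier_mat d1 d1. \<Phi>1 X = \<Phi> X \<and> \<Phi>2 X = \<Phi> X))"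

definition mat_unit :: "nat \<Rightarrow> nat \<Rightarrow> nat \<Rightarrow> complex mat" where
  "mat_unit d r s = mat d d (\<lambda>(i,j). if i = r \<and> j = s then 1 else 0)"

text \<open>Choi matrix sum_{r,s} E_rs \<otimes> Phi(E_rs), written entrywise:
  entry ((r,a),(s,b)) with row index r*d2+a and column index s*d2+b is Phi(E_rs)_{ab}.\<close>
definition choi_matrix :: "nat \<Rightarrow> nat \<Rightarrow> (complex mat \<Rightarrow> complex mat) \<Rightarrow> complex mat" where
  "choi_matrix d1 d2 \<Phi> = mat (d1 * d2) (d1 * d2)
     (\<lambda>(i,j). \<Phi> (mat_unit d1 (i div d2) (j div d2)) $$ (i mod d2, j mod d2))"

definition choi_rank :: "nat \<Rightarrow> nat \<Rightarrow> (complex mat \<Rightarrow> complex mat) \<Rightarrow> nat" where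
  "choi_rank d1 d2 \<Phi> = vec_space.rank (d1 * d2) (choi_matrix d1 d2 \<Phi>)"

definition all_ones_mat :: "nat \<Rightarrow> complex mat" where
  "all_ones_mat d = mat d d (\<lambda>_. 1)"

end

theory Submission
  imports Defs "Jordan_Normal_Form.DL_Rank_Submatrix"
begin


definition ga :: "nat \<Rightarrow> real" where "ga d = 1 / sqrt (real d)"
definition al :: "nat \<Rightarrow> real" where "al d = sqrt ((real d + 1) / real d)"
definition be :: "nat \<Rightarrow> real" where "be d = (ga d - al d) / real d"
definition sg :: "nat \<Rightarrow> nat \<Rightarrow> real" where "sg d m = 1 / sqrt (real d + real m)"
definition vr :: "nat \<Rightarrow> nat \<Rightarrow> nat \<Rightarrow> nat \<Rightarrow> real" where
  "vr d m a r = sg d m * (if a < d then (if r = a then al d else 0) + be d else ga d)"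

lemma ga2: "d > 0 \<Longrightarrow> ga d ^ 2 = 1 / real d"
  unfolding ga_def by (simp add: power_divide)
lemma al2: "d > 0 \<Longrightarrow> al d ^ 2 = (real d + 1) / real d"
  unfolding al_def by simp
lemma sg2: "sg d m ^ 2 = 1 / (real d + real m)"
  unfolding sg_def by (simp add: power_divide)
lemma ga_pos: "d > 0 \<Longrightarrow> ga d > 0" unfolding ga_def by simp
lemma al_pos: "d > 0 \<Longrightarrow> al d > 0" unfolding al_def by simp
lemma al_dbe: "d > 0 \<Longrightarrow> al d + real d * be d = ga d"
  unfolding be_def by simp
lemma key1: "d > 0 \<Longrightarrow> 2 * al d * be d + real d * be d ^ 2 = - 1 / real d"
proof -
  assume d: "d > 0"
  have "real d * (2 * al d * be d + real d * be d ^ 2) = (real d * be d) * (2 * al d + real d * be d)"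
    by (simp add: algebra_simps power2_eq_square)
  also have "\<dots> = (ga d - al d) * (ga d + al d)" using d unfolding be_def by simp
  also have "\<dots> = ga d ^ 2 - al d ^ 2" by (simp add: algebra_simps power2_eq_square)
  also have "\<dots> = -1" using d by (simp add: ga2 al2 field_simps)
  finally show ?thesis using d by (simp add: field_simps)
qed
lemma be_ne: "d > 0 \<Longrightarrow> be d \<noteq> 0"
proof
  assume d: "d > 0" and "be d = 0"
  then have "ga d = al d" unfolding be_def by simp
  then have "ga d ^ 2 = al d ^ 2" by simp
  with d show False by (simp add: ga2 al2 field_simps)
qed
lemma albe_pos: "d > 0 \<Longrightarrow> al d + be d > 0"
proof -
  assume d: "d > 0"
  have "al d + be d = ((real d - 1) * al d + ga d) / real d" using d unfolding be_def by (simp add: field_simps)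
  moreover have "(real d - 1) * al d \<ge> 0" using d al_pos[OF d] by simp
  ultimately show ?thesis using ga_pos[OF d] d by simp
qed

definition su :: "nat \<Rightarrow> nat \<Rightarrow> nat \<Rightarrow> real" where
  "su d a r = (if a < d then (if r = a then al d else 0) + be d else ga d)"

lemma vr_su: "vr d m a r = sg d m * su d a r" unfolding vr_def su_def by simp

lemma sum_ifeq2: "(\<Sum>r<(d::nat). c * (if r = a then x else 0)) = (if a < d then c * x else (0::real))"
  by (simp add: if_distrib[of "\<lambda>x. c * x"] cong: if_cong)

lemma sum_ifeq: "(\<Sum>r<(d::nat). (if r = a then c else 0) * f r) = (if a < d then c * f a else (0::real))"
proof -
  have "(\<Sum>r<d. (if r = a then c else 0) * f r) = (\<Sum>r<d. if r = a then c * f a else 0)"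
    by (rule sum.cong) auto
  also have "\<dots> = (if a < d then c * f a else 0)" by (simp only: sum.delta finite_lessThan) simp
  finally show ?thesis .
qed

lemma key1': "d > 0 \<Longrightarrow> al d * be d + al d * be d + real d * be d ^ 2 = - 1 / real d"
  using key1[of d] by simp
lemma al2': "d > 0 \<Longrightarrow> al d ^ 2 = 1 + 1 / real d"
  using al2[of d] by (simp add: field_simps)

lemma gram_su:
  assumes d: "d > 0"
  shows "(\<Sum>r<d. su d a r * su d b r) =
    (if a = b \<or> (d \<le> a \<and> d \<le> b) then 1 else if a < d \<and> b < d then - 1 / real d else 1 / real d)"
proof (cases "a < d")
  case a: True
  show ?thesis
  proof (cases "b < d")
    case b: True
    have "(\<Sum>r<d. su d a r * su d b r) = (\<Sum>r<d. (if r = a then al d else 0) * (if r = b then al d else 0)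
         + (if r = a then al d else 0) * be d + (if r = b then al d else 0) * be d + be d * be d)"
      using a b unfolding su_def by (intro sum.cong) (auto simp: algebra_simps)
    also have "\<dots> = (if a = b then al d ^ 2 else 0) + al d * be d + al d * be d + real d * be d ^ 2"
      using a b by (simp add: sum.distrib sum_ifeq power2_eq_square)
    finally show ?thesis using a b key1'[OF d] al2'[OF d] d
      by auto
  next
    case b: False
    have "(\<Sum>r<d. su d a r * su d b r) = (\<Sum>r<d. (if r = a then al d else 0) * ga d + be d * ga d)"
      using a b unfolding su_def by (intro sum.cong) (auto simp: algebra_simps)
    also have "\<dots> = ga d * (al d + real d * be d)"
      using a b by (simp add: sum.distrib sum_ifeq sum_ifeq2 algebra_simps)
    also have "\<dots> = 1 / real d" using al_dbe[OF d] ga2[OF d] by (simp add: power2_eq_square)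
    finally show ?thesis using a b by auto
  qed
next
  case a: False
  show ?thesis
  proof (cases "b < d")
    case b: True
    have "(\<Sum>r<d. su d a r * su d b r) = (\<Sum>r<d. (if r = b then al d else 0) * ga d + be d * ga d)"
      using a b unfolding su_def by (intro sum.cong) (auto simp: algebra_simps)
    also have "\<dots> = ga d * (al d + real d * be d)"
      using a b by (simp add: sum.distrib sum_ifeq sum_ifeq2 algebra_simps)
    also have "\<dots> = 1 / real d" using al_dbe[OF d] ga2[OF d] by (simp add: power2_eq_square)
    finally show ?thesis using a b by auto
  next
    case b: False
    have "(\<Sum>r<d. su d a r * su d b r) = real d * ga d ^ 2"
      using a b unfolding su_def by (simp add: power2_eq_square)
    then show ?thesis using a b ga2[OF d] d by auto
  qed
qed

lemma colsum_su:
  assumes d: "d > 0" and r: "r < d" and s: "s < d"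
  shows "(\<Sum>a<d+m. su d a r * su d a s) = (if r = s then (real d + 1) / real d else 0) + (real m - 1) / real d"
proof -
  have split: "{..<d+m} = {..<d} \<union> {d..<d+m}" by auto
  have "(\<Sum>a<d+m. su d a r * su d a s) = (\<Sum>a<d. su d a r * su d a s) + (\<Sum>a\<in>{d..<d+m}. su d a r * su d a s)"
    unfolding split by (rule sum.union_disjoint) auto
  also have "(\<Sum>a\<in>{d..<d+m}. su d a r * su d a s) = real m * ga d ^ 2"
    unfolding su_def by (simp add: power2_eq_square)
  also have "(\<Sum>a<d. su d a r * su d a s) = (\<Sum>a<d. (if a = r then al d else 0) * (if a = s then al d else 0)
         + (if a = r then al d else 0) * be d + (if a = s then al d else 0) * be d + be d * be d)"
    unfolding su_def by (intro sum.cong) (auto simp: algebra_simps)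
  also have "\<dots> = (if r = s then al d ^ 2 else 0) + al d * be d + al d * be d + real d * be d ^ 2"
    using r s by (simp add: sum.distrib sum_ifeq power2_eq_square)
  finally have "(\<Sum>a<d+m. su d a r * su d a s) = (if r = s then al d ^ 2 else 0) + (al d * be d + al d * be d + real d * be d ^ 2) + real m * ga d ^ 2" by simp
  then show ?thesis using key1'[OF d] al2[OF d] ga2[OF d] d
    by (auto simp: field_simps)
qed

lemma su0_ne: "d > 0 \<Longrightarrow> su d a 0 \<noteq> 0"
  unfolding su_def using be_ne[of d] albe_pos[of d] ga_pos[of d] by auto



lemma adj_dims: "dim_row (mat_adjoint A) = dim_col A" "dim_col (mat_adjoint A) = dim_row A"
  unfolding mat_adjoint_def by auto

lemma adj_index: "i < dim_col A \<Longrightarrow> j < dim_row A \<Longrightarrow> mat_adjoint A $$ (i,j) = conjugate (A $$ (j,i))"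
  unfolding mat_adjoint_def by (simp add: mat_of_rows_def)

lemma mult_entry: "i < dim_row A \<Longrightarrow> j < dim_col B \<Longrightarrow> dim_col A = dim_row B \<Longrightarrow>
   (A * B) $$ (i,j) = (\<Sum>r<dim_row B. A $$ (i,r) * B $$ (r,j))"
  by (simp add: scalar_prod_def atLeast0LessThan)

definition kq :: "nat \<Rightarrow> complex mat \<Rightarrow> complex mat \<Rightarrow> nat \<Rightarrow> nat \<Rightarrow> complex" where
  "kq d1 K X i j = (\<Sum>r<d1. \<Sum>s<d1. K $$ (i,r) * X $$ (r,s) * cnj (K $$ (j,s)))"

lemma kraus_term:
  assumes K: "K \<in> carrier_mat d2 d1" and X: "X \<in> carrier_mat d1 d1" and i: "i < d2" and j: "j < d2"
  shows "(K * X * mat_adjoint K) $$ (i,j) = kq d1 K X i j"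
proof -
  have "(K * X * mat_adjoint K) $$ (i,j) = (\<Sum>s<d1. (K * X) $$ (i,s) * mat_adjoint K $$ (s,j))"
    using K X i j by (subst mult_entry) (auto simp: adj_dims)
  also have "\<dots> = (\<Sum>s<d1. (\<Sum>r<d1. K $$ (i,r) * X $$ (r,s)) * cnj (K $$ (j,s)))"
  proof (intro sum.cong refl)
    fix s assume s: "s \<in> {..<d1}"
    have "(K * X) $$ (i,s) = (\<Sum>r<d1. K $$ (i,r) * X $$ (r,s))"
      using K X i s by (subst mult_entry) auto
    moreover have "mat_adjoint K $$ (s,j) = cnj (K $$ (j,s))" using K s j by (subst adj_index) auto
    ultimately show "(K * X) $$ (i,s) * mat_adjoint K $$ (s,j) = (\<Sum>r<d1. K $$ (i,r) * X $$ (r,s)) * cnj (K $$ (j,s))"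
      by simp
  qed
  also have "\<dots> = kq d1 K X i j" unfolding kq_def
    by (subst sum.swap) (simp add: sum_distrib_right)
  finally show ?thesis .
qed

lemma kraus_foldr:
  assumes Ks: "set Ks \<subseteq> carrier_mat d2 d1" and X: "X \<in> carrier_mat d1 d1"
  shows "foldr (\<lambda>K acc. K * X * mat_adjoint K + acc) Ks (0\<^sub>m d2 d2) \<in> carrier_mat d2 d2 \<and>
    (\<forall>i<d2. \<forall>j<d2. foldr (\<lambda>K acc. K * X * mat_adjoint K + acc) Ks (0\<^sub>m d2 d2) $$ (i,j)
        = sum_list (map (\<lambda>K. kq d1 K X i j) Ks))"
  using Ks
proof (induction Ks)
  case Nil
  then show ?case by simp
next
  case (Cons K Ks)
  then have K: "K \<in> carrier_mat d2 d1" and IH: "foldr (\<lambda>K acc. K * X * mat_adjoint K + acc) Ks (0\<^sub>m d2 d2) \<in> carrier_mat d2 d2 \<and>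
    (\<forall>i<d2. \<forall>j<d2. foldr (\<lambda>K acc. K * X * mat_adjoint K + acc) Ks (0\<^sub>m d2 d2) $$ (i,j)
        = sum_list (map (\<lambda>K. kq d1 K X i j) Ks))" by auto
  have KA: "mat_adjoint K \<in> carrier_mat d1 d2" using K unfolding carrier_mat_def by (simp add: adj_dims)
  have KX: "K * X * mat_adjoint K \<in> carrier_mat d2 d2"
    by (rule mult_carrier_mat[OF mult_carrier_mat[OF K X] KA])
  show ?case
  proof (intro conjI allI impI)
    show "foldr (\<lambda>K acc. K * X * mat_adjoint K + acc) (K # Ks) (0\<^sub>m d2 d2) \<in> carrier_mat d2 d2"
      using IH KX by simp
    fix i j assume i: "i < d2" and j: "j < d2"
    have "foldr (\<lambda>K acc. K * X * mat_adjoint K + acc) (K # Ks) (0\<^sub>m d2 d2) $$ (i,j) =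
       (K * X * mat_adjoint K) $$ (i,j) + foldr (\<lambda>K acc. K * X * mat_adjoint K + acc) Ks (0\<^sub>m d2 d2) $$ (i,j)"
      unfolding foldr.simps o_def using IH i j by (intro index_add_mat(1)) auto
    then show "foldr (\<lambda>K acc. K * X * mat_adjoint K + acc) (K # Ks) (0\<^sub>m d2 d2) $$ (i,j) = sum_list (map (\<lambda>K. kq d1 K X i j) (K # Ks))"
      using IH kraus_term[OF K X i j] i j by simp
  qed
qed


lemma sum_list_upt_map: "sum_list (map f [0..<n]) = (\<Sum>a<n. f a)"
  by (simp add: sum.distinct_set_conv_list[symmetric] atLeast0LessThan)

lemma of_real_sum_list: "sum_list (map (\<lambda>x. complex_of_real (f x)) xs) = complex_of_real (sum_list (map f xs))"
  by (induction xs) auto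

lemma sum_list_mult_right: "sum_list (map (\<lambda>x. f x * (c::complex)) xs) = sum_list (map f xs) * c"
  by (induction xs) (auto simp: algebra_simps)

definition vv :: "nat \<Rightarrow> nat \<Rightarrow> nat \<Rightarrow> nat \<Rightarrow> complex" where
  "vv d m a r = complex_of_real (vr d m a r)"
definition KK :: "nat \<Rightarrow> nat \<Rightarrow> nat \<Rightarrow> complex mat" where
  "KK d m a = mat (d+m) d (\<lambda>(i,r). if i = a then vv d m a r else 0)"
definition Ks :: "nat \<Rightarrow> nat \<Rightarrow> complex mat list" where
  "Ks d m = map (KK d m) [0..<d+m]"
definition Phi :: "nat \<Rightarrow> nat \<Rightarrow> complex mat \<Rightarrow> complex mat" where
  "Phi d m X = foldr (\<lambda>K acc. K * X * mat_adjoint K + acc) (Ks d m) (0\<^sub>m (d+m) (d+m))"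
definition Q :: "nat \<Rightarrow> nat \<Rightarrow> nat \<Rightarrow> nat \<Rightarrow> complex mat \<Rightarrow> complex" where
  "Q d m a b X = (\<Sum>r<d. \<Sum>s<d. vv d m a r * X $$ (r,s) * vv d m b s)"

lemma cnj_vv[simp]: "cnj (vv d m a r) = vv d m a r" unfolding vv_def by simp

lemma Ks_carrier: "set (Ks d m) \<subseteq> carrier_mat (d+m) d"
  unfolding Ks_def KK_def by auto

lemma KK_index: "i < d + m \<Longrightarrow> r < d \<Longrightarrow> KK d m a $$ (i,r) = (if i = a then vv d m a r else 0)"
  unfolding KK_def by simp

lemma kq_KK: "i < d + m \<Longrightarrow> j < d + m \<Longrightarrow>
  kq d (KK d m a) X i j = (if i = a \<and> j = a then Q d m a a X else 0)"
  unfolding kq_def Q_def by (simp add: KK_index)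

lemma Phi_carrier: "X \<in> carrier_mat d d \<Longrightarrow> Phi d m X \<in> carrier_mat (d+m) (d+m)"
  unfolding Phi_def using kraus_foldr[OF Ks_carrier] by blast

lemma Phi_entry:
  assumes X: "X \<in> carrier_mat d d" and i: "i < d + m" and j: "j < d + m"
  shows "Phi d m X $$ (i,j) = (if i = j then Q d m i i X else 0)"
proof -
  have "Phi d m X $$ (i,j) = sum_list (map (\<lambda>K. kq d K X i j) (Ks d m))"
    unfolding Phi_def using kraus_foldr[OF Ks_carrier X] i j by blast
  also have "\<dots> = (\<Sum>a<d+m. kq d (KK d m a) X i j)"
    unfolding Ks_def by (simp add: sum_list_upt_map o_def)
  also have "\<dots> = (\<Sum>a<d+m. if a = i then (if i = j then Q d m i i X else 0) else 0)"
    using i j by (intro sum.cong refl) (auto simp: kq_KK)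
  also have "\<dots> = (if i = j then Q d m i i X else 0)" using i by simp
  finally show ?thesis .
qed

lemma kq_rank1:
  assumes "K \<in> carrier_mat d2 d1"
  shows "kq d1 K (mat d1 d1 (\<lambda>(r,s). y r * cnj (y s))) i i
     = complex_of_real ((cmod (\<Sum>r<d1. K $$ (i,r) * y r))\<^sup>2)"
proof -
  have "kq d1 K (mat d1 d1 (\<lambda>(r,s). y r * cnj (y s))) i i
     = (\<Sum>r<d1. \<Sum>s<d1. (K $$ (i,r) * y r) * cnj (K $$ (i,s) * y s))"
    unfolding kq_def by (intro sum.cong refl) (simp add: algebra_simps)
  also have "\<dots> = (\<Sum>r<d1. K $$ (i,r) * y r) * cnj (\<Sum>s<d1. K $$ (i,s) * y s)"
    by (simp add: sum_product)
  also have "\<dots> = complex_of_real ((cmod (\<Sum>r<d1. K $$ (i,r) * y r))\<^sup>2)"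
    by (rule complex_norm_square[symmetric])
  finally show ?thesis .
qed


lemma vv0_ne: "d > 0 \<Longrightarrow> vv d m a 0 \<noteq> 0"
  unfolding vv_def vr_su sg_def using su0_ne[of d a] by simp

lemma Q_one:
  assumes "d > 0"
  shows "Q d m a b (1\<^sub>m d) = complex_of_real (sg d m ^ 2 * (\<Sum>r<d. su d a r * su d b r))"
proof -
  have "Q d m a b (1\<^sub>m d) = (\<Sum>r<d. \<Sum>s<d. if s = r then vv d m a r * vv d m b r else 0)"
    unfolding Q_def by (intro sum.cong refl) auto
  also have "\<dots> = (\<Sum>r<d. vv d m a r * vv d m b r)" by simp
  also have "\<dots> = complex_of_real (sg d m ^ 2 * (\<Sum>r<d. su d a r * su d b r))"
    unfolding vv_def vr_su by (simp add: sum_distrib_left power2_eq_square algebra_simps)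
  finally show ?thesis .
qed

lemma Q_one_diag: "d > 0 \<Longrightarrow> Q d m a a (1\<^sub>m d) = complex_of_real (1 / (real d + real m))"
  using Q_one[of d m a a] gram_su[of d a a] sg2[of d m] by simp

lemma Q_one_ne: "d > 0 \<Longrightarrow> Q d m a b (1\<^sub>m d) \<noteq> 0"
proof -
  assume d: "d > 0"
  have "(\<Sum>r<d. su d a r * su d b r) \<noteq> 0" using gram_su[OF d, of a b] d by auto
  moreover have "sg d m ^ 2 \<noteq> 0" using sg2[of d m] d by simp
  ultimately show ?thesis using Q_one[OF d, of m a b] by (simp only: of_real_eq_0_iff mult_eq_0_iff) simp
qed

lemma uniq:
  assumes d: "d > 0" and Ls: "set Ls \<subseteq> carrier_mat (d+m) d"
  and hI: "foldr (\<lambda>K acc. K * 1\<^sub>m d * mat_adjoint K + acc) Ls (0\<^sub>m (d+m) (d+m))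
           = complex_of_real (1 / real (d+m)) \<cdot>\<^sub>m 1\<^sub>m (d+m)"
  and h2: "\<forall>a<d+m. \<forall>L\<in>set Ls. \<forall>j<d. L $$ (a,j) * vv d m a 0 = L $$ (a,0) * vv d m a j"
  and X: "X \<in> carrier_mat d d"
  shows "foldr (\<lambda>K acc. K * X * mat_adjoint K + acc) Ls (0\<^sub>m (d+m) (d+m)) = Phi d m X"
proof -
  define mu where "mu L a = L $$ (a,0) / vv d m a 0" for L a
  define M where "M a b = sum_list (map (\<lambda>L. mu L a * cnj (mu L b)) Ls)" for a b
  have Lform: "L $$ (a,r) = mu L a * vv d m a r" if "L \<in> set Ls" "a < d+m" "r < d" for L a r
    using h2 that vv0_ne[OF d, of m a] unfolding mu_def by (auto simp: field_simps)
  have F: "foldr (\<lambda>K acc. K * Y * mat_adjoint K + acc) Ls (0\<^sub>m (d+m) (d+m)) $$ (a,b) = M a b * Q d m a b Y"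
    if Y: "Y \<in> carrier_mat d d" and a: "a < d+m" and b: "b < d+m" for Y a b
  proof -
    have "foldr (\<lambda>K acc. K * Y * mat_adjoint K + acc) Ls (0\<^sub>m (d+m) (d+m)) $$ (a,b)
        = sum_list (map (\<lambda>L. kq d L Y a b) Ls)"
      using kraus_foldr[OF Ls Y] a b by blast
    also have "\<dots> = sum_list (map (\<lambda>L. (mu L a * cnj (mu L b)) * Q d m a b Y) Ls)"
    proof (intro arg_cong[where f = sum_list] map_cong refl)
      fix L assume L: "L \<in> set Ls"
      have "kq d L Y a b = (\<Sum>r<d. \<Sum>s<d. (mu L a * cnj (mu L b)) * (vv d m a r * Y $$ (r,s) * vv d m b s))"
        unfolding kq_def using L a b by (intro sum.cong refl) (simp add: Lform)
      also have "\<dots> = (mu L a * cnj (mu L b)) * Q d m a b Y"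
        unfolding Q_def by (simp add: sum_distrib_left)
      finally show "kq d L Y a b = (mu L a * cnj (mu L b)) * Q d m a b Y" .
    qed
    also have "\<dots> = M a b * Q d m a b Y" unfolding M_def by (rule sum_list_mult_right)
    finally show ?thesis .
  qed
  have C: "foldr (\<lambda>K acc. K * X * mat_adjoint K + acc) Ls (0\<^sub>m (d+m) (d+m)) \<in> carrier_mat (d+m) (d+m)"
    using kraus_foldr[OF Ls X] by blast
  show ?thesis
  proof (rule eq_matI)
    show "dim_row (foldr (\<lambda>K acc. K * X * mat_adjoint K + acc) Ls (0\<^sub>m (d+m) (d+m))) = dim_row (Phi d m X)"
      using C Phi_carrier[OF X, of m] by simp
    show "dim_col (foldr (\<lambda>K acc. K * X * mat_adjoint K + acc) Ls (0\<^sub>m (d+m) (d+m))) = dim_col (Phi d m X)"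
      using C Phi_carrier[OF X, of m] by simp
    fix a b assume a: "a < dim_row (Phi d m X)" and b: "b < dim_col (Phi d m X)"
    then have a: "a < d+m" and b: "b < d+m" using Phi_carrier[OF X, of m] by auto
    have "foldr (\<lambda>K acc. K * 1\<^sub>m d * mat_adjoint K + acc) Ls (0\<^sub>m (d+m) (d+m)) $$ (a,b) = (if a = b then complex_of_real (1 / real (d+m)) else 0)"
      unfolding hI using a b by simp
    then have I1: "M a b * Q d m a b (1\<^sub>m d) = (if a = b then complex_of_real (1 / real (d+m)) else 0)"
      using F[of "1\<^sub>m d" a b] a b by simp
    have nz: "complex_of_real (1 / real (d+m)) \<noteq> 0" using d by (simp only: of_real_eq_0_iff) simp
    show "foldr (\<lambda>K acc. K * X * mat_adjoint K + acc) Ls (0\<^sub>m (d+m) (d+m)) $$ (a,b) = Phi d m X $$ (a,b)"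
    proof (cases "a = b")
      case True
      have "M a b * complex_of_real (1 / real (d+m)) = 1 * complex_of_real (1 / real (d+m))"
        using I1 Q_one_diag[OF d, of m a] True by simp
      then have "M a b = 1" using nz by (simp only: mult_cancel_right) simp
      then show ?thesis using F[OF X a b] Phi_entry[OF X a b] True by simp
    next
      case False
      then have "M a b = 0" using I1 Q_one_ne[OF d, of m a b] by (simp only: if_False mult_eq_0_iff) simp
      then show ?thesis using F[OF X a b] Phi_entry[OF X a b] False by simp
    qed
  qed
qed


lemma wsum:
  assumes j: "j < (d::nat)" "j \<noteq> 0"
  shows "(\<Sum>r<d. f r * (if r = j then c1 else if r = 0 then c2 else 0)) = f j * c1 + f 0 * (c2::complex)"
proof -
  have "(\<Sum>r<d. f r * (if r = j then c1 else if r = 0 then c2 else 0))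
      = (\<Sum>r<d. (if r = j then f j * c1 else 0) + (if r = 0 then f 0 * c2 else 0))"
    using j by (intro sum.cong refl) auto
  also have "\<dots> = f j * c1 + f 0 * c2" using j by (simp add: sum.distrib)
  finally show ?thesis .
qed

lemma foldr_rank1:
  assumes Ls: "set Ls \<subseteq> carrier_mat d2 d1" and a: "a < d2"
  shows "foldr (\<lambda>K acc. K * mat d1 d1 (\<lambda>(r,s). y r * cnj (y s)) * mat_adjoint K + acc) Ls (0\<^sub>m d2 d2) $$ (a,a)
     = complex_of_real (sum_list (map (\<lambda>L. (cmod (\<Sum>r<d1. L $$ (a,r) * y r))\<^sup>2) Ls))"
proof -
  have "foldr (\<lambda>K acc. K * mat d1 d1 (\<lambda>(r,s). y r * cnj (y s)) * mat_adjoint K + acc) Ls (0\<^sub>m d2 d2) $$ (a,a)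
      = sum_list (map (\<lambda>L. kq d1 L (mat d1 d1 (\<lambda>(r,s). y r * cnj (y s))) a a) Ls)"
    using kraus_foldr[OF Ls, of "mat d1 d1 (\<lambda>(r,s). y r * cnj (y s))"] a by auto
  also have "\<dots> = sum_list (map (\<lambda>L. complex_of_real ((cmod (\<Sum>r<d1. L $$ (a,r) * y r))\<^sup>2)) Ls)"
    using Ls by (intro arg_cong[where f = sum_list] map_cong refl kq_rank1) auto
  finally show ?thesis by (simp only: of_real_sum_list)
qed

lemma h2_from:
  assumes d: "d > 0" and Ls1: "set Ls1 \<subseteq> carrier_mat (d+m) d" and Ls2: "set Ls2 \<subseteq> carrier_mat (d+m) d"
  and t: "0 < t" "t < 1"
  and comb: "\<forall>X\<in>carrier_mat d d. Phi d m X =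
     complex_of_real t \<cdot>\<^sub>m foldr (\<lambda>K acc. K * X * mat_adjoint K + acc) Ls1 (0\<^sub>m (d+m) (d+m))
     + complex_of_real (1 - t) \<cdot>\<^sub>m foldr (\<lambda>K acc. K * X * mat_adjoint K + acc) Ls2 (0\<^sub>m (d+m) (d+m))"
  shows "\<forall>a<d+m. \<forall>L\<in>set Ls1. \<forall>j<d. L $$ (a,j) * vv d m a 0 = L $$ (a,0) * vv d m a j"
proof (intro allI impI ballI)
  fix a L j assume a: "a < d+m" and L: "L \<in> set Ls1" and j: "j < d"
  show "L $$ (a,j) * vv d m a 0 = L $$ (a,0) * vv d m a j"
  proof (cases "j = 0")
    case True then show ?thesis by simp
  next
    case jn: False
    define y where "y r = (if r = j then vv d m a 0 else if r = 0 then - vv d m a j else 0)" for r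
    define Y where "Y = mat d d (\<lambda>(r,s). y r * cnj (y s))"
    have Y: "Y \<in> carrier_mat d d" unfolding Y_def by simp
    have ws: "(\<Sum>r<d. K $$ (a,r) * y r) = K $$ (a,j) * vv d m a 0 - K $$ (a,0) * vv d m a j" for K
      unfolding y_def using wsum[OF j jn, of "\<lambda>r. K $$ (a,r)"] by simp
    have "Phi d m Y $$ (a,a) = Q d m a a Y" using Phi_entry[OF Y a a] by simp
    also have "\<dots> = kq d (KK d m a) Y a a" using kq_KK[OF a a] by simp
    also have "\<dots> = complex_of_real ((cmod (\<Sum>r<d. KK d m a $$ (a,r) * y r))\<^sup>2)"
      unfolding Y_def by (rule kq_rank1[of _ "d+m"]) (simp add: KK_def)
    also have "(\<Sum>r<d. KK d m a $$ (a,r) * y r) = 0"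
      using ws[of "KK d m a"] a j d by (simp add: KK_index)
    finally have P0: "Phi d m Y $$ (a,a) = 0" by simp
    define S1 where "S1 = sum_list (map (\<lambda>L. (cmod (\<Sum>r<d. L $$ (a,r) * y r))\<^sup>2) Ls1)"
    define S2 where "S2 = sum_list (map (\<lambda>L. (cmod (\<Sum>r<d. L $$ (a,r) * y r))\<^sup>2) Ls2)"
    have F1: "foldr (\<lambda>K acc. K * Y * mat_adjoint K + acc) Ls1 (0\<^sub>m (d+m) (d+m)) $$ (a,a) = complex_of_real S1"
      unfolding S1_def Y_def by (rule foldr_rank1[OF Ls1 a])
    have F2: "foldr (\<lambda>K acc. K * Y * mat_adjoint K + acc) Ls2 (0\<^sub>m (d+m) (d+m)) $$ (a,a) = complex_of_real S2"
      unfolding S2_def Y_def by (rule foldr_rank1[OF Ls2 a])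
    have C1: "foldr (\<lambda>K acc. K * Y * mat_adjoint K + acc) Ls1 (0\<^sub>m (d+m) (d+m)) \<in> carrier_mat (d+m) (d+m)"
      using kraus_foldr[OF Ls1 Y] by blast
    have C2: "foldr (\<lambda>K acc. K * Y * mat_adjoint K + acc) Ls2 (0\<^sub>m (d+m) (d+m)) \<in> carrier_mat (d+m) (d+m)"
      using kraus_foldr[OF Ls2 Y] by blast
    have "Phi d m Y $$ (a,a) = complex_of_real t * complex_of_real S1 + complex_of_real (1 - t) * complex_of_real S2"
      using comb Y C1 C2 a F1 F2 by simp
    with P0 have "complex_of_real (t * S1 + (1 - t) * S2) = 0" by simp
    then have E: "t * S1 + (1 - t) * S2 = 0" by (simp only: of_real_eq_0_iff)
    have "S1 \<ge> 0" "S2 \<ge> 0" unfolding S1_def S2_def by (auto intro!: sum_list_nonneg)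
    then have "S1 = 0" using E t by (smt (verit) mult_nonneg_nonneg mult_pos_pos)
    then have "\<forall>x\<in>set (map (\<lambda>L. (cmod (\<Sum>r<d. L $$ (a,r) * y r))\<^sup>2) Ls1). x = 0"
      unfolding S1_def by (subst (asm) sum_list_nonneg_eq_0_iff) auto
    then have "(\<Sum>r<d. L $$ (a,r) * y r) = 0" using L by auto
    then show ?thesis using ws[of L] by simp
  qed
qed


lemma Phi_one: "d > 0 \<Longrightarrow> Phi d m (1\<^sub>m d) = complex_of_real (1 / real (d + m)) \<cdot>\<^sub>m 1\<^sub>m (d + m)"
proof (rule eq_matI)
  assume d: "d > 0"
  have C: "Phi d m (1\<^sub>m d) \<in> carrier_mat (d+m) (d+m)" by (rule Phi_carrier) simp
  then show "dim_row (Phi d m (1\<^sub>m d)) = dim_row (complex_of_real (1 / real (d + m)) \<cdot>\<^sub>m 1\<^sub>m (d + m))"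
    "dim_col (Phi d m (1\<^sub>m d)) = dim_col (complex_of_real (1 / real (d + m)) \<cdot>\<^sub>m 1\<^sub>m (d + m))" by auto
  fix i j assume "i < dim_row (complex_of_real (1 / real (d + m)) \<cdot>\<^sub>m 1\<^sub>m (d + m))"
    "j < dim_col (complex_of_real (1 / real (d + m)) \<cdot>\<^sub>m 1\<^sub>m (d + m))"
  then have i: "i < d+m" and j: "j < d+m" by auto
  show "Phi d m (1\<^sub>m d) $$ (i,j) = (complex_of_real (1 / real (d + m)) \<cdot>\<^sub>m 1\<^sub>m (d + m)) $$ (i,j)"
    using Phi_entry[OF _ i j, of "1\<^sub>m d"] Q_one_diag[OF d, of m i] Q_one_diag[OF d, of m j] i j by simp
qed

lemma colsum_vr:
  assumes d: "d > 0" and r: "r < d" and s: "s < d"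
  shows "(\<Sum>a<d+m. vr d m a r * vr d m a s) =
    (if r = s then ((real d + 1) / (real d + real m)) / real d else 0)
    + (1 - (real d + 1) / (real d + real m)) / real d"
proof -
  have "(\<Sum>a<d+m. vr d m a r * vr d m a s) = sg d m ^ 2 * (\<Sum>a<d+m. su d a r * su d a s)"
    unfolding vr_su by (simp add: sum_distrib_left power2_eq_square algebra_simps)
  also have "\<dots> = (1 / (real d + real m)) * ((if r = s then (real d + 1) / real d else 0) + (real m - 1) / real d)"
    using colsum_su[OF d r s] sg2 by simp
  also have "\<dots> = (if r = s then ((real d + 1) / (real d + real m)) / real d else 0)
    + ((real m - 1) / (real d + real m)) / real d" by (simp add: add_divide_distrib mult.commute)
  also have "(real m - 1) / (real d + real m) = 1 - (real d + 1) / (real d + real m)"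
    using d by (simp add: field_simps)
  finally show ?thesis .
qed

lemma hs_Phi:
  fixes d m :: nat
  assumes d: "d > 0"
  defines "p \<equiv> (real d + 1) / (real d + real m)"
  defines "Z \<equiv> complex_of_real (p / real d) \<cdot>\<^sub>m 1\<^sub>m d
               + complex_of_real ((1 - p) / real d) \<cdot>\<^sub>m all_ones_mat d"
  shows "hs_adjoint_at_identity d (Phi d m) Z"
  unfolding hs_adjoint_at_identity_def
proof
  fix X :: "complex mat" assume X: "X \<in> carrier_mat d d"
  define zr where "zr r s = (if r = s then p / real d else 0) + (1 - p) / real d" for r s :: nat
  have Zc: "Z \<in> carrier_mat d d" unfolding Z_def all_ones_mat_def by simp
  have Ze: "Z $$ (r,s) = complex_of_real (zr r s)" if "r < d" "s < d" for r s
    unfolding Z_def all_ones_mat_def zr_def using that by simp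
  have AZ: "mat_adjoint Z \<in> carrier_mat d d" using Zc unfolding carrier_mat_def by (simp add: adj_dims)
  have "mtrace (mat_adjoint Z * X) = (\<Sum>i<d. (mat_adjoint Z * X) $$ (i,i))"
    unfolding mtrace_def using AZ X by simp
  also have "\<dots> = (\<Sum>i<d. \<Sum>k<d. complex_of_real (zr k i) * X $$ (k,i))"
  proof (intro sum.cong refl)
    fix i assume i: "i \<in> {..<d}"
    have "(mat_adjoint Z * X) $$ (i,i) = (\<Sum>k<d. mat_adjoint Z $$ (i,k) * X $$ (k,i))"
      using AZ X i by (subst mult_entry) auto
    also have "\<dots> = (\<Sum>k<d. complex_of_real (zr k i) * X $$ (k,i))"
      using Zc i by (intro sum.cong refl) (simp add: adj_index Ze)
    finally show "(mat_adjoint Z * X) $$ (i,i) = (\<Sum>k<d. complex_of_real (zr k i) * X $$ (k,i))" .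
  qed
  also have "\<dots> = (\<Sum>k<d. \<Sum>i<d. complex_of_real (zr k i) * X $$ (k,i))" by (rule sum.swap)
  also have "\<dots> = (\<Sum>r<d. \<Sum>s<d. X $$ (r,s) * (\<Sum>a<d+m. vv d m a r * vv d m a s))"
  proof (intro sum.cong refl)
    fix r s assume r: "r \<in> {..<d}" and s: "s \<in> {..<d}"
    have "(\<Sum>a<d+m. vv d m a r * vv d m a s) = complex_of_real (\<Sum>a<d+m. vr d m a r * vr d m a s)"
      unfolding vv_def by simp
    also have "\<dots> = complex_of_real (zr r s)" using colsum_vr[OF d, of r s m] r s unfolding zr_def p_def by simp
    finally show "complex_of_real (zr r s) * X $$ (r,s) = X $$ (r,s) * (\<Sum>a<d+m. vv d m a r * vv d m a s)"
      by simp
  qed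
  also have "\<dots> = (\<Sum>a<d+m. Q d m a a X)"
    unfolding Q_def
    by (simp add: sum_distrib_left sum.swap[of _ "{..<d+m}"] algebra_simps)
  also have "\<dots> = mtrace (Phi d m X)"
    unfolding mtrace_def using Phi_carrier[OF X, of m] Phi_entry[OF X] by simp
  finally show "mtrace (mat_adjoint Z * X) = mtrace (Phi d m X)" .
qed


lemma Q_unit: "r < d \<Longrightarrow> s < d \<Longrightarrow> Q d m a a (mat_unit d r s) = vv d m a r * vv d m a s"
proof -
  assume r: "r < d" and s: "s < d"
  have "Q d m a a (mat_unit d r s) = (\<Sum>r'<d. \<Sum>s'<d. (if r' = r then vv d m a r' else 0) * (if s' = s then vv d m a s' else 0))"
    unfolding Q_def mat_unit_def by (intro sum.cong refl) auto
  also have "\<dots> = (\<Sum>r'<d. if r' = r then vv d m a r' else 0) * (\<Sum>s'<d. if s' = s then vv d m a s' else 0)"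
    by (simp only: sum_product)
  also have "\<dots> = vv d m a r * vv d m a s" using r s by simp
  finally show ?thesis .
qed

lemma choi_entry:
  assumes d: "d > 0" and i: "i < d * (d+m)" and j: "j < d * (d+m)"
  shows "choi_matrix d (d+m) (Phi d m) $$ (i,j) =
    (if i mod (d+m) = j mod (d+m) then vv d m (i mod (d+m)) (i div (d+m)) * vv d m (i mod (d+m)) (j div (d+m)) else 0)"
proof -
  have n: "d + m > 0" using d by simp
  have id: "i div (d+m) < d" "j div (d+m) < d" using i j by (auto simp: less_mult_imp_div_less mult.commute)
  have im: "i mod (d+m) < d+m" "j mod (d+m) < d+m" using n by auto
  have U: "mat_unit d (i div (d+m)) (j div (d+m)) \<in> carrier_mat d d" unfolding mat_unit_def by simp
  show ?thesis unfolding choi_matrix_def using i j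
    Phi_entry[OF U im] Q_unit[OF id] by simp
qed

definition ff :: "nat \<Rightarrow> nat \<Rightarrow> nat \<Rightarrow> nat \<Rightarrow> complex" where
  "ff d m a i = (if i mod (d+m) = a then vv d m a (i div (d+m)) else 0)"
definition CA :: "nat \<Rightarrow> nat \<Rightarrow> nat \<Rightarrow> complex mat" where
  "CA d m a = mat (d*(d+m)) (d*(d+m)) (\<lambda>(i,j). ff d m a i * ff d m a j)"
primrec CS :: "nat \<Rightarrow> nat \<Rightarrow> nat \<Rightarrow> complex mat" where
  "CS d m 0 = 0\<^sub>m (d*(d+m)) (d*(d+m))"
| "CS d m (Suc k) = CA d m k + CS d m k"

lemma CS_props: "CS d m k \<in> carrier_mat (d*(d+m)) (d*(d+m)) \<and>
   vec_space.rank (d*(d+m)) (CS d m k) \<le> k \<and>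
   (\<forall>i<d*(d+m). \<forall>j<d*(d+m). CS d m k $$ (i,j) = (\<Sum>a<k. ff d m a i * ff d m a j))"
proof (induction k)
  case 0
  then show ?case using vec_space.rank_0I by simp
next
  case (Suc k)
  have CAc: "CA d m k \<in> carrier_mat (d*(d+m)) (d*(d+m))" unfolding CA_def by simp
  have r1: "vec_space.rank (d*(d+m)) (CA d m k) \<le> 1"
    by (rule vec_space.rank_le_1_product_entries[OF CAc, of "ff d m k" "ff d m k"]) (simp add: CA_def)
  have "vec_space.rank (d*(d+m)) (CA d m k + CS d m k) \<le> vec_space.rank (d*(d+m)) (CA d m k) + vec_space.rank (d*(d+m)) (CS d m k)"
    using vec_space.rank_subadditive[OF CAc] Suc.IH by blast
  then have "vec_space.rank (d*(d+m)) (CS d m (Suc k)) \<le> Suc k" using r1 Suc.IH by simp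
  moreover have "CS d m (Suc k) \<in> carrier_mat (d*(d+m)) (d*(d+m))" using CAc Suc.IH by simp
  moreover have "\<forall>i<d*(d+m). \<forall>j<d*(d+m). CS d m (Suc k) $$ (i,j) = (\<Sum>a<Suc k. ff d m a i * ff d m a j)"
  proof (intro allI impI)
    fix i j assume i: "i < d*(d+m)" and j: "j < d*(d+m)"
    have C: "CS d m k \<in> carrier_mat (d*(d+m)) (d*(d+m))" using Suc.IH by blast
    have E: "CS d m k $$ (i,j) = (\<Sum>a<k. ff d m a i * ff d m a j)" using Suc.IH i j by blast
    have "CS d m (Suc k) $$ (i,j) = CA d m k $$ (i,j) + CS d m k $$ (i,j)"
      using C i j by simp
    then show "CS d m (Suc k) $$ (i,j) = (\<Sum>a<Suc k. ff d m a i * ff d m a j)"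
      using E i j by (simp add: CA_def)
  qed
  ultimately show ?case by blast
qed

lemma choi_eq_CS:
  assumes d: "d > 0"
  shows "choi_matrix d (d+m) (Phi d m) = CS d m (d+m)"
proof (rule eq_matI)
  show "dim_row (choi_matrix d (d+m) (Phi d m)) = dim_row (CS d m (d+m))"
    "dim_col (choi_matrix d (d+m) (Phi d m)) = dim_col (CS d m (d+m))"
    using CS_props[of d m "d+m"] unfolding choi_matrix_def by auto
  fix i j assume "i < dim_row (CS d m (d+m))" "j < dim_col (CS d m (d+m))"
  then have i: "i < d*(d+m)" and j: "j < d*(d+m)" using CS_props[of d m "d+m"] by auto
  have n: "d + m > 0" using d by simp
  have "CS d m (d+m) $$ (i,j) = (\<Sum>a<d+m. ff d m a i * ff d m a j)" using CS_props[of d m "d+m"] i j by blast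
  also have "\<dots> = (\<Sum>a<d+m. if a = i mod (d+m) then (if i mod (d+m) = j mod (d+m) then
       vv d m (i mod (d+m)) (i div (d+m)) * vv d m (i mod (d+m)) (j div (d+m)) else 0) else 0)"
    unfolding ff_def by (intro sum.cong refl) auto
  also have "\<dots> = choi_matrix d (d+m) (Phi d m) $$ (i,j)"
    using choi_entry[OF d i j] n by simp
  finally show "choi_matrix d (d+m) (Phi d m) $$ (i,j) = CS d m (d+m) $$ (i,j)" by simp
qed


lemma pick_lessThan:
  fixes i n :: nat
  shows "i < n \<Longrightarrow> pick {..<n} i = i"
proof (induction i)
  case 0
  then show ?case unfolding pick.simps by (intro Least_eq_0) simp
next
  case (Suc i)
  then have "pick {..<n} i = i" by simp
  then show ?case using Suc.prems by (auto intro!: Least_equality)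
qed

lemma choi_rank_ge:
  assumes d: "d > 0"
  shows "d + m \<le> vec_space.rank (d*(d+m)) (choi_matrix d (d+m) (Phi d m))"
proof -
  let ?N = "d*(d+m)" and ?n = "d+m"
  let ?C = "choi_matrix d (d+m) (Phi d m)"
  have Cc: "?C \<in> carrier_mat ?N ?N" unfolding choi_matrix_def by simp
  have nN: "?n \<le> ?N" using d by simp
  have card: "card {i. i < ?N \<and> i \<in> {..<?n}} = ?n"
  proof -
    have "{i. i < ?N \<and> i \<in> {..<?n}} = {..<?n}" using nN by (auto intro: less_le_trans)
    then show ?thesis by simp
  qed
  define SM where "SM = submatrix ?C {..<?n} {..<?n}"
  have dC: "dim_row ?C = ?N" "dim_col ?C = ?N" using Cc by auto
  have Sc: "SM \<in> carrier_mat ?n ?n" by (rule carrier_matI) (simp_all only: SM_def dim_submatrix dC card)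
  have Se: "SM $$ (i,j) = (if i = j then vv d m i 0 * vv d m i 0 else 0)" if i: "i < ?n" and j: "j < ?n" for i j
  proof -
    have "SM $$ (i,j) = ?C $$ (pick {..<?n} i, pick {..<?n} j)" unfolding SM_def submatrix_def
      using i j unfolding dC card by (subst index_mat) auto
    also have "\<dots> = ?C $$ (i,j)" using i j by (simp only: pick_lessThan)
    also have "\<dots> = (if i = j then vv d m i 0 * vv d m i 0 else 0)"
      using choi_entry[OF d, of i m j] i j nN by simp
    finally show ?thesis .
  qed
  have ut: "upper_triangular SM" unfolding upper_triangular_def using Sc Se by auto
  have "det SM = prod_list (diag_mat SM)" by (rule det_upper_triangular[OF ut Sc])
  also have "\<dots> \<noteq> 0"
    unfolding diag_mat_def using Sc Se vv0_ne[OF d, of m] by (auto simp: prod_list_zero_iff)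
  finally have "det SM \<noteq> 0" .
  then have "card {j. j < ?N \<and> j \<in> {..<?n}} \<le> vec_space.rank ?N ?C"
    unfolding SM_def by (rule vec_space.rank_gt_minor[OF Cc])
  then show ?thesis using card by simp
qed

lemma choi_rank_eq: "d > 0 \<Longrightarrow> choi_rank d (d+m) (Phi d m) = d + m"
  unfolding choi_rank_def using choi_rank_ge[of d m] choi_eq_CS[of d m] CS_props[of d m "d+m"] by auto


lemma cp_carrier:
  assumes "completely_positive d1 d2 F" and "X \<in> carrier_mat d1 d1"
  shows "F X \<in> carrier_mat d2 d2"
proof -
  obtain Ls where Ls: "set Ls \<subseteq> carrier_mat d2 d1"
    and E: "\<forall>X\<in>carrier_mat d1 d1. F X = foldr (\<lambda>K acc. K * X * mat_adjoint K + acc) Ls (0\<^sub>m d2 d2)"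
    using assms(1) unfolding completely_positive_def by blast
  show ?thesis using E assms(2) kraus_foldr[OF Ls assms(2)] by simp
qed

theorem mainTheorem1:
  fixes d m :: nat
  assumes "d \<ge> 2" and "m \<ge> 1"
  defines "p \<equiv> (real d + 1) / (real d + real m)"
  defines "Z \<equiv> complex_of_real (p / real d) \<cdot>\<^sub>m 1\<^sub>m d
               + complex_of_real ((1 - p) / real d) \<cdot>\<^sub>m all_ones_mat d"
  shows "\<exists>\<Phi>. extreme_point_maps d
                (CP_set d (d + m) Z (complex_of_real (1 / real (d + m)) \<cdot>\<^sub>m 1\<^sub>m (d + m))) \<Phi>
              \<and> choi_rank d (d + m) \<Phi> = d + m"
proof (intro exI conjI)
  have d: "d > 0" using assms(1) by simp
  let ?B = "complex_of_real (1 / real (d + m)) \<cdot>\<^sub>m 1\<^sub>m (d + m)"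
  let ?K = "CP_set d (d + m) Z ?B"
  have cp: "completely_positive d (d+m) (Phi d m)"
    unfolding completely_positive_def Phi_def using Ks_carrier by blast
  have hs: "hs_adjoint_at_identity d (Phi d m) Z"
    unfolding Z_def p_def by (rule hs_Phi[OF d])
  have mem: "Phi d m \<in> ?K" unfolding CP_set_def using cp hs Phi_one[OF d, of m] by simp
  have key: "\<forall>X\<in>carrier_mat d d. \<Phi>1 X = Phi d m X"
    if P1: "\<Phi>1 \<in> ?K" and P2: "\<Phi>2 \<in> ?K" and t: "0 < t" "t < 1"
    and comb: "\<forall>X\<in>carrier_mat d d. Phi d m X = complex_of_real t \<cdot>\<^sub>m \<Phi>1 X + complex_of_real (1 - t) \<cdot>\<^sub>m \<Phi>2 X"
    for \<Phi>1 \<Phi>2 t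
  proof -
    obtain Ls1 where Ls1: "set Ls1 \<subseteq> carrier_mat (d+m) d"
      and E1: "\<forall>X\<in>carrier_mat d d. \<Phi>1 X = foldr (\<lambda>K acc. K * X * mat_adjoint K + acc) Ls1 (0\<^sub>m (d+m) (d+m))"
      using P1 unfolding CP_set_def completely_positive_def by blast
    obtain Ls2 where Ls2: "set Ls2 \<subseteq> carrier_mat (d+m) d"
      and E2: "\<forall>X\<in>carrier_mat d d. \<Phi>2 X = foldr (\<lambda>K acc. K * X * mat_adjoint K + acc) Ls2 (0\<^sub>m (d+m) (d+m))"
      using P2 unfolding CP_set_def completely_positive_def by blast
    have I1: "\<Phi>1 (1\<^sub>m d) = ?B" using P1 unfolding CP_set_def by simp
    have comb': "\<forall>X\<in>carrier_mat d d. Phi d m X =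
     complex_of_real t \<cdot>\<^sub>m foldr (\<lambda>K acc. K * X * mat_adjoint K + acc) Ls1 (0\<^sub>m (d+m) (d+m))
     + complex_of_real (1 - t) \<cdot>\<^sub>m foldr (\<lambda>K acc. K * X * mat_adjoint K + acc) Ls2 (0\<^sub>m (d+m) (d+m))"
      using comb E1 E2 by simp
    have h2: "\<forall>a<d+m. \<forall>L\<in>set Ls1. \<forall>j<d. L $$ (a,j) * vv d m a 0 = L $$ (a,0) * vv d m a j"
      by (rule h2_from[OF d Ls1 Ls2 t comb'])
    have hI: "foldr (\<lambda>K acc. K * 1\<^sub>m d * mat_adjoint K + acc) Ls1 (0\<^sub>m (d+m) (d+m)) = ?B"
      using E1 I1 by (metis one_carrier_mat)
    show ?thesis using uniq[OF d Ls1 hI h2] E1 by simp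
  qed
  show "extreme_point_maps d ?K (Phi d m)"
    unfolding extreme_point_maps_def
  proof (rule conjI[OF mem], intro ballI allI impI)
    fix \<Phi>1 \<Phi>2 and t :: real and X :: "complex mat"
    assume P1: "\<Phi>1 \<in> ?K" and P2: "\<Phi>2 \<in> ?K"
      and H: "0 < t \<and> t < 1 \<and> (\<forall>X\<in>carrier_mat d d. Phi d m X = complex_of_real t \<cdot>\<^sub>m \<Phi>1 X + complex_of_real (1 - t) \<cdot>\<^sub>m \<Phi>2 X)"
      and X: "X \<in> carrier_mat d d"
    have k1: "\<forall>X\<in>carrier_mat d d. \<Phi>1 X = Phi d m X" using key[OF P1 P2] H by blast
    have H2: "\<forall>X\<in>carrier_mat d d. Phi d m X = complex_of_real (1 - t) \<cdot>\<^sub>m \<Phi>2 X + complex_of_real (1 - (1 - t)) \<cdot>\<^sub>m \<Phi>1 X"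
    proof
      fix Y :: "complex mat" assume Y: "Y \<in> carrier_mat d d"
      have c1: "\<Phi>1 Y \<in> carrier_mat (d+m) (d+m)" using P1 Y cp_carrier unfolding CP_set_def by blast
      have c2: "\<Phi>2 Y \<in> carrier_mat (d+m) (d+m)" using P2 Y cp_carrier unfolding CP_set_def by blast
      have "Phi d m Y = complex_of_real t \<cdot>\<^sub>m \<Phi>1 Y + complex_of_real (1 - t) \<cdot>\<^sub>m \<Phi>2 Y" using H Y by blast
      also have "\<dots> = complex_of_real (1 - t) \<cdot>\<^sub>m \<Phi>2 Y + complex_of_real t \<cdot>\<^sub>m \<Phi>1 Y"
        by (rule comm_add_mat[OF smult_carrier_mat[OF c1] smult_carrier_mat[OF c2]])
      finally show "Phi d m Y = complex_of_real (1 - t) \<cdot>\<^sub>m \<Phi>2 Y + complex_of_real (1 - (1 - t)) \<cdot>\<^sub>m \<Phi>1 Y"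
        by simp
    qed
    have k2: "\<forall>X\<in>carrier_mat d d. \<Phi>2 X = Phi d m X" using key[OF P2 P1, of "1 - t"] H H2 by simp
    show "\<Phi>1 X = Phi d m X \<and> \<Phi>2 X = Phi d m X" using k1 k2 X by blast
  qed
  show "choi_rank d (d + m) (Phi d m) = d + m" by (rule choi_rank_eq[OF d])
qed

end
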